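(* For every $n\ge 1$, $N(\mathbb{R}^n)\le 3n$; that is, there exists a totally skew embedding $\mathbb{R}^n\to\mathbb{R}^{3n}$.
   Context: For a submanifold $M\subseteq\mathbb{R}^N$ and distinct points $p,q\in M$, $M$ is totally skew at $p$ and $q$ if for every (affine) line tangent to $M$ at $p$ and every line tangent to $M$ at $q$, the two lines are neither parallel nor intersecting. A totally skew embedding of a manifold $M$ is an embedding $f:M\to\mathbb{R}^N$ such that $f(M)$ is totally skew at every pair of distinct points. $N(M)$ denotes the smallest $N$ for which a totally skew embedding $M\to\mathbb{R}^N$ exists. *)

theory Defs
  imports "HOL-Analysis.Analysis"
begin

text \<open>C-infinity smoothness: all iterated directional derivatives exist everywhere.\<close>
coinductive smooth_map :: "('a::real_normed_vector \<Rightarrow> 'b::real_normed_vector) \<Rightarrow> bool" where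
  "\<lbrakk>\<And>x. (g has_derivative g' x) (at x); \<And>v. smooth_map (\<lambda>x. g' x v)\<rbrakk> \<Longrightarrow> smooth_map g"

definition smooth_embedding :: "('a::euclidean_space \<Rightarrow> 'b::euclidean_space) \<Rightarrow> bool" where
  "smooth_embedding f \<longleftrightarrow> smooth_map f
     \<and> (\<forall>p. inj (frechet_derivative f (at p)))
     \<and> (\<exists>g. homeomorphism UNIV (range f) f g)"

definition tangent_lines :: "('a::euclidean_space \<Rightarrow> 'b::euclidean_space) \<Rightarrow> 'a \<Rightarrow> 'b set set" where
  "tangent_lines f p = {{f p + t *\<^sub>R u | t. True} | u. u \<in> range (frechet_derivative f (at p)) \<and> u \<noteq> 0}"

definition parallel_sets :: "'b::real_vector set \<Rightarrow> 'b set \<Rightarrow> bool" where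
  "parallel_sets L1 L2 \<longleftrightarrow> (\<exists>c. L2 = (\<lambda>x. c + x) ` L1)"

definition totally_skew_at :: "('a::euclidean_space \<Rightarrow> 'b::euclidean_space) \<Rightarrow> 'a \<Rightarrow> 'a \<Rightarrow> bool" where
  "totally_skew_at f p q \<longleftrightarrow>
     (\<forall>L1 \<in> tangent_lines f p. \<forall>L2 \<in> tangent_lines f q.
        \<not> parallel_sets L1 L2 \<and> L1 \<inter> L2 = {})"

definition totally_skew_embedding :: "('a::euclidean_space \<Rightarrow> 'b::euclidean_space) \<Rightarrow> bool" where
  "totally_skew_embedding f \<longleftrightarrow> smooth_embedding f \<and> (\<forall>p q. p \<noteq> q \<longrightarrow> totally_skew_at f p q)"

end

theory Submission
  imports Defs "HOL-Computational_Algebra.Polynomial_FPS"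
begin


definition EE :: "real fps \<Rightarrow> real fps" where "EE A = fps_exp 1 oo A"

lemma EE_0: "fps_nth (EE A) 0 = 1"
  by (simp add: EE_def)

lemma EE_deriv: "fps_nth A 0 = 0 \<Longrightarrow> fps_deriv (EE A) = fps_deriv A * EE A"
  unfolding EE_def by (simp add: fps_compose_deriv mult.commute)

lemma EE_inv: assumes "fps_nth A 0 = 0" shows "EE A * EE (-A) = 1"
proof -
  have m0: "fps_nth (-A) 0 = 0" using assms by simp
  define C where "C = -A"
  have c0: "fps_nth C 0 = 0" using m0 by (simp add: C_def)
  have "fps_deriv (EE A * EE C) = (fps_deriv A + fps_deriv C) * (EE A * EE C)"
    using EE_deriv[OF assms] EE_deriv[OF c0] by (simp add: fps_deriv_mult algebra_simps)
  also have "\<dots> = 0" by (simp add: C_def)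
  finally have "fps_deriv (EE A * EE (-A)) = 0" by (simp add: C_def)
  hence "EE A * EE (-A) = fps_const (fps_nth (EE A * EE (-A)) 0)"
    using fps_deriv_eq_0_iff by blast
  also have "\<dots> = 1" by (simp add: EE_0)
  finally show ?thesis .
qed

lemma EE_add: assumes "fps_nth A 0 = 0" "fps_nth B 0 = 0" shows "EE (A + B) = EE A * EE B"
proof -
  have ab: "fps_nth (A+B) 0 = 0" "fps_nth (-(A+B)) 0 = 0" using assms by simp_all
  define C where "C = -(A+B)"
  have c0: "fps_nth C 0 = 0" using ab by (simp add: C_def)
  have "fps_deriv (EE A * EE B * EE C) = (fps_deriv A + fps_deriv B + fps_deriv C) * (EE A * EE B * EE C)"
    using EE_deriv[OF assms(1)] EE_deriv[OF assms(2)] EE_deriv[OF c0] by (simp add: fps_deriv_mult algebra_simps)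
  also have "\<dots> = 0" by (simp add: C_def)
  finally have "fps_deriv (EE A * EE B * EE (-(A+B))) = 0" by (simp add: C_def)
  hence "EE A * EE B * EE (-(A+B)) = fps_const (fps_nth (EE A * EE B * EE (-(A+B))) 0)"
    using fps_deriv_eq_0_iff by blast
  also have "\<dots> = 1" by (simp add: EE_0)
  finally have 1: "EE A * EE B * EE (-(A+B)) = 1" .
  have "EE A * EE B = EE A * EE B * (EE (-(A+B)) * EE (A+B))"
    using EE_inv[OF ab(1)] by (simp add: mult.commute)
  also have "\<dots> = EE (A+B)" using 1 by (metis mult.assoc mult_1)
  finally show ?thesis by simp
qed

definition agree :: "nat \<Rightarrow> real fps \<Rightarrow> real fps \<Rightarrow> bool" where
  "agree m U V \<longleftrightarrow> (\<forall>k\<le>m. fps_nth U k = fps_nth V k)"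

lemma agree_mult: "agree m U V \<Longrightarrow> agree m (W * U) (W * V)"
  unfolding agree_def by (auto simp: fps_mult_nth intro!: sum.cong)

lemma agree_mult2: "agree m U V \<Longrightarrow> agree m (U * W) (V * W)"
  using agree_mult[of m U V W] by (simp add: mult.commute)

lemma agree_trans: "agree m U V \<Longrightarrow> agree m V W \<Longrightarrow> agree m U W"
  unfolding agree_def by auto

lemma agree_sym: "agree m U V \<Longrightarrow> agree m V U"
  unfolding agree_def by auto

lemma agree_mono: "agree m U V \<Longrightarrow> k \<le> m \<Longrightarrow> agree k U V"
  unfolding agree_def by auto

lemma agree_unit:
  assumes "fps_nth D 0 = 0" "agree m (EE D * M) V" shows "agree m M (EE (-D) * V)"
proof -
  have "agree m (EE (-D) * (EE D * M)) (EE (-D) * V)" by (rule agree_mult[OF assms(2)])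
  moreover have "EE (-D) * (EE D * M) = M"
    using EE_inv[OF assms(1)] by (metis mult.assoc mult.commute mult_1)
  ultimately show ?thesis by simp
qed

lemma agree_deriv: "agree (Suc m) U V \<Longrightarrow> agree m (fps_deriv U) (fps_deriv V)"
  unfolding agree_def by auto

lemma key_poly:
  fixes D M A :: "real poly"
  assumes "degree D \<noteq> 0" "M * pderiv A = (pderiv D * M + pderiv M) * A"
  shows "M = 0 \<or> A = 0"
proof (rule ccontr)
  assume nz: "\<not> (M = 0 \<or> A = 0)"
  hence M0: "M \<noteq> 0" and A0: "A \<noteq> 0" by auto
  have pD: "pderiv D \<noteq> 0" using assms(1) by (simp add: pderiv_eq_0_iff)
  have eq: "pderiv D * M * A = M * pderiv A - pderiv M * A"
    using assms(2) by (simp add: algebra_simps)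
  have dl: "degree (pderiv D * M * A) = degree (pderiv D) + degree M + degree A"
    using pD M0 A0 by (simp add: degree_mult_eq)
  have lhs_nz: "pderiv D * M * A \<noteq> 0" using pD M0 A0 by simp
  show False
  proof (cases "degree M + degree A = 0")
    case True
    hence "pderiv A = 0" "pderiv M = 0" by (simp_all add: pderiv_eq_0_iff)
    thus False using eq lhs_nz by simp
  next
    case False
    have b1: "degree (M * pderiv A) \<le> degree M + degree A - 1"
    proof (cases "degree A = 0")
      case True hence "pderiv A = 0" by (simp add: pderiv_eq_0_iff)
      thus ?thesis by simp
    next
      case False
      have "degree (M * pderiv A) \<le> degree M + degree (pderiv A)" by (rule degree_mult_le)
      also have "\<dots> = degree M + (degree A - 1)" by (simp add: degree_pderiv)
      finally show ?thesis using False by simp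
    qed
    have b2: "degree (pderiv M * A) \<le> degree M + degree A - 1"
    proof (cases "degree M = 0")
      case True hence "pderiv M = 0" by (simp add: pderiv_eq_0_iff)
      thus ?thesis by simp
    next
      case False
      have "degree (pderiv M * A) \<le> degree (pderiv M) + degree A" by (rule degree_mult_le)
      also have "\<dots> = (degree M - 1) + degree A" by (simp add: degree_pderiv)
      finally show ?thesis using False by simp
    qed
    have "degree (M * pderiv A - pderiv M * A) \<le> degree M + degree A - 1"
      using degree_diff_le[OF b1 b2] .
    hence "degree (pderiv D * M * A) \<le> degree M + degree A - 1" using eq by simp
    thus False using dl False by arith
  qed
qed

lemma poly_zero_if_low:
  fixes R :: "real poly"
  assumes "degree R \<le> m" "\<And>k. k \<le> m \<Longrightarrow> coeff R k = 0"
  shows "R = 0"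
proof (rule poly_eqI)
  fix k show "coeff R k = coeff 0 k"
    using assms by (cases "k \<le> m") (auto intro: coeff_eq_0)
qed

lemma key:
  fixes D M A :: "real poly" and n :: nat
  assumes n1: "1 \<le> n" and dD: "degree D \<le> n" and dM: "degree M \<le> n" and dA: "degree A \<le> n"
    and D0: "coeff D 0 = 0" and Dnz: "D \<noteq> 0"
    and ag: "agree (3*n) (EE (fps_of_poly D) * fps_of_poly M) (fps_of_poly A)"
  shows "M = 0"
proof -
  define Dh Mh Ah where "Dh = fps_of_poly D" "Mh = fps_of_poly M" "Ah = fps_of_poly A"
  define Y where "Y = EE Dh * Mh"
  have d0: "fps_nth Dh 0 = 0" using D0 by (simp add: Dh_Mh_Ah_def)
  have "fps_deriv Y = fps_deriv Dh * EE Dh * Mh + EE Dh * fps_deriv Mh"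
    unfolding Y_def by (simp add: fps_deriv_mult EE_deriv[OF d0] algebra_simps)
  hence Yid: "Mh * fps_deriv Y = (fps_deriv Dh * Mh + fps_deriv Mh) * Y"
    unfolding Y_def by (simp add: algebra_simps)
  have agY: "agree (3*n) Y Ah" using ag by (simp add: Y_def Dh_Mh_Ah_def)
  have s: "Suc (3*n - 1) = 3*n" using n1 by simp
  have agd: "agree (3*n - 1) (fps_deriv Y) (fps_deriv Ah)"
    using agY s agree_deriv[of "3*n - 1" Y Ah] by simp
  have a1: "agree (3*n - 1) (Mh * fps_deriv Y) (Mh * fps_deriv Ah)"
    by (rule agree_mult[OF agd])
  have a2: "agree (3*n - 1) ((fps_deriv Dh * Mh + fps_deriv Mh) * Y) ((fps_deriv Dh * Mh + fps_deriv Mh) * Ah)"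
    by (rule agree_mult[OF agree_mono[OF agY]]) simp
  have a3: "agree (3*n - 1) (Mh * fps_deriv Ah) ((fps_deriv Dh * Mh + fps_deriv Mh) * Ah)"
    using a1 a2 Yid unfolding agree_def by metis
  define R where "R = M * pderiv A - (pderiv D * M + pderiv M) * A"
  have fR: "fps_of_poly R = Mh * fps_deriv Ah - (fps_deriv Dh * Mh + fps_deriv Mh) * Ah"
    by (simp add: R_def Dh_Mh_Ah_def fps_of_poly_simps fps_of_poly_pderiv)
  have cR: "coeff R k = 0" if "k \<le> 3*n - 1" for k
  proof -
    have "coeff R k = fps_nth (fps_of_poly R) k" by simp
    also have "\<dots> = 0" using a3 that unfolding fR agree_def by simp
    finally show ?thesis .
  qed
  have dpA: "degree (pderiv A) \<le> n - 1" using dA by (simp add: degree_pderiv)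
  have dpD: "degree (pderiv D) \<le> n - 1" using dD by (simp add: degree_pderiv)
  have dpM: "degree (pderiv M) \<le> n - 1" using dM by (simp add: degree_pderiv)
  have e1: "degree (M * pderiv A) \<le> 3*n - 1"
    using degree_mult_le[of M "pderiv A"] dM dpA n1 by linarith
  have e2: "degree (pderiv D * M) \<le> 3*n - 1"
    using degree_mult_le[of "pderiv D" M] dM dpD n1 by linarith
  have e2': "degree (pderiv D * M) \<le> 2*n - 1"
    using degree_mult_le[of "pderiv D" M] dM dpD n1 by linarith
  have e3: "degree (pderiv M) \<le> 2*n - 1" using dpM n1 by linarith
  have e4: "degree (pderiv D * M + pderiv M) \<le> 2*n - 1"
    using degree_add_le[OF e2' e3] .
  have e5: "degree ((pderiv D * M + pderiv M) * A) \<le> 3*n - 1"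
    using degree_mult_le[of "pderiv D * M + pderiv M" A] e4 dA n1 by linarith
  have "degree R \<le> 3*n - 1" unfolding R_def using degree_diff_le[OF e1 e5] .
  hence "R = 0" using cR by (rule poly_zero_if_low)
  hence eq: "M * pderiv A = (pderiv D * M + pderiv M) * A" by (simp add: R_def)
  have "degree D \<noteq> 0"
  proof
    assume "degree D = 0"
    hence "D = [:coeff D 0:]" by (metis degree_0_id)
    thus False using D0 Dnz by simp
  qed
  from key_poly[OF this eq] have "M = 0 \<or> A = 0" .
  thus ?thesis
  proof
    assume "A = 0"
    hence "agree (3*n) (EE Dh * Mh) 0" using ag by (simp add: Dh_Mh_Ah_def)
    hence "agree (3*n) Mh (EE (-Dh) * 0)" by (rule agree_unit[OF d0])
    hence "\<And>k. k \<le> 3*n \<Longrightarrow> coeff M k = 0" by (simp add: agree_def Dh_Mh_Ah_def)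
    moreover have "degree M \<le> 3*n" using dM by simp
    ultimately show "M = 0" using poly_zero_if_low by blast
  qed
qed



definition iota :: "'a::finite \<Rightarrow> nat" where
  "iota = (SOME h. bij_betw h (UNIV::'a set) {0..<CARD('a)})"

lemma iota_bij: "bij_betw (iota::'a::finite \<Rightarrow> nat) UNIV {0..<CARD('a)}"
proof -
  have "\<exists>h. bij_betw h (UNIV::'a set) {0..<CARD('a)}"
    using ex_bij_betw_finite_nat[of "UNIV::'a set"] by simp
  thus ?thesis unfolding iota_def by (rule someI_ex)
qed

lemma iota_inj: "iota (i::'a::finite) = iota j \<longleftrightarrow> i = j"
  using iota_bij[where 'a='a] unfolding bij_betw_def inj_on_def by blast

lemma iota_less: "iota (i::'a::finite) < CARD('a)"
  using iota_bij[where 'a='a] unfolding bij_betw_def by auto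

lemma iota_surj: "k < CARD('a::finite) \<Longrightarrow> \<exists>i::'a. iota i = k"
  using iota_bij[where 'a='a] unfolding bij_betw_def by (metis atLeastLessThan_iff image_iff zero_le)

definition Xp :: "real^'n::finite \<Rightarrow> real poly" where
  "Xp x = (\<Sum>i\<in>UNIV. monom (x$i) (Suc (iota i)))"

lemma coeff_Xp: "coeff (Xp x) k = (\<Sum>i\<in>UNIV. if Suc (iota i) = k then x$i else 0)"
  unfolding Xp_def by (simp add: coeff_sum coeff_monom)

lemma coeff_Xp_0[simp]: "coeff (Xp x) 0 = 0"
  by (simp add: coeff_Xp)

lemma coeff_Xp_Suc[simp]: "coeff (Xp x) (Suc (iota i)) = x$i"
proof -
  have "coeff (Xp x) (Suc (iota i)) = (\<Sum>i'\<in>UNIV. if i' = i then x$i' else 0)"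
    unfolding coeff_Xp by (intro sum.cong) (auto simp: iota_inj)
  thus ?thesis by simp
qed

lemma degree_Xp: "degree (Xp (x::real^'n::finite)) \<le> CARD('n)"
proof -
  have "degree (Xp x) \<le> Max ((\<lambda>i. degree (monom (x$i) (Suc (iota i)))) ` UNIV)"
    unfolding Xp_def by (rule degree_sum_le) auto
  also have "\<dots> \<le> CARD('n)"
    using iota_less by (auto simp: degree_monom_le intro!: Max.boundedI order.trans[OF degree_monom_le] Suc_leI)
  finally show ?thesis .
qed

lemma Xp_add: "Xp (x + y) = Xp x + Xp y"
  by (rule poly_eqI) (auto simp: coeff_Xp sum.distrib[symmetric] intro!: sum.cong)

lemma Xp_diff: "Xp (x - y) = Xp x - Xp y"
  by (rule poly_eqI) (auto simp: coeff_Xp sum_subtractf[symmetric] intro!: sum.cong)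

lemma Xp_scale: "Xp (c *\<^sub>R x) = smult c (Xp x)"
  by (rule poly_eqI) (auto simp: coeff_Xp sum_distrib_left intro!: sum.cong)

lemma Xp_zero[simp]: "Xp 0 = 0"
  by (simp add: Xp_def)

lemma Xp_eq_0: "Xp x = 0 \<Longrightarrow> x = 0"
  by (metis coeff_Xp_Suc coeff_0 vec_eq_iff zero_index)

definition Xf :: "real^'n::finite \<Rightarrow> real fps" where "Xf x = fps_of_poly (Xp x)"

lemma Xf_0[simp]: "fps_nth (Xf x) 0 = 0" by (simp add: Xf_def)

lemma Xf_add: "Xf (x + y) = Xf x + Xf y" by (simp add: Xf_def Xp_add fps_of_poly_add)
lemma Xf_zero[simp]: "Xf 0 = 0" by (simp add: Xf_def)

lemma EE_Xf_shift: "EE (Xf y) = EE (Xf x) * EE (Xf (y - x))"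
proof -
  have "Xf y = Xf x + Xf (y - x)" using Xf_add[of x "y - x"] by simp
  thus ?thesis using EE_add[of "Xf x" "Xf (y - x)"] by simp
qed



definition cd :: "(real^'n::finite \<Rightarrow> real fps) \<Rightarrow> (real^'n \<Rightarrow> real fps) \<Rightarrow> real^'n \<Rightarrow> bool" where
  "cd A A' x \<longleftrightarrow> (\<forall>k. ((\<lambda>y. fps_nth (A y) k) has_derivative (\<lambda>v. fps_nth (A' v) k)) (at x))"

lemma cd_const: "cd (\<lambda>y. C) (\<lambda>v. 0) x"
  unfolding cd_def by simp

lemma cd_Xf: "cd Xf Xf x"
  unfolding cd_def Xf_def fps_of_poly_nth coeff_Xp
proof
  fix k
  show "((\<lambda>y. \<Sum>i\<in>UNIV. if Suc (iota i) = k then y $ i else 0) has_derivative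
         (\<lambda>v. \<Sum>i\<in>UNIV. if Suc (iota i) = k then v $ i else 0)) (at x)"
  proof (rule has_derivative_sum)
    fix i :: 'a
    show "((\<lambda>y. if Suc (iota i) = k then y $ i else 0) has_derivative
         (\<lambda>v. if Suc (iota i) = k then v $ i else 0)) (at x)"
      by (cases "Suc (iota i) = k") (simp_all add: bounded_linear_imp_has_derivative[OF bounded_linear_vec_nth])
  qed
qed

lemma cd_mult:
  assumes "cd A A' x" "cd B B' x"
  shows "cd (\<lambda>y. A y * B y) (\<lambda>v. A' v * B x + A x * B' v) x"
  unfolding cd_def
proof
  fix k
  have "((\<lambda>y. \<Sum>i=0..k. fps_nth (A y) i * fps_nth (B y) (k - i)) has_derivative
        (\<lambda>v. \<Sum>i=0..k. fps_nth (A x) i * fps_nth (B' v) (k - i) + fps_nth (A' v) i * fps_nth (B x) (k - i))) (at x)"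
    using assms unfolding cd_def by (intro has_derivative_sum has_derivative_mult) auto
  thus "((\<lambda>y. fps_nth (A y * B y) k) has_derivative (\<lambda>v. fps_nth (A' v * B x + A x * B' v) k)) (at x)"
    by (simp add: fps_mult_nth sum.distrib algebra_simps)
qed

lemma cd_power:
  assumes "cd A A' x"
  shows "cd (\<lambda>y. A y ^ i) (\<lambda>v. fps_const (of_nat i) * A x ^ (i - 1) * A' v) x"
proof (induction i)
  case 0
  show ?case using cd_const[of 1 x] by simp
next
  case (Suc i)
  have "cd (\<lambda>y. A y * A y ^ i) (\<lambda>v. A' v * A x ^ i + A x * (fps_const (of_nat i) * A x ^ (i - 1) * A' v)) x"
    by (rule cd_mult[OF assms Suc])
  moreover have "(\<lambda>v. A' v * A x ^ i + A x * (fps_const (of_nat i) * A x ^ (i - 1) * A' v))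
      = (\<lambda>v. fps_const (of_nat (Suc i)) * A x ^ (Suc i - 1) * A' v)"
  proof
    fix v
    show "A' v * A x ^ i + A x * (fps_const (of_nat i) * A x ^ (i - 1) * A' v)
      = fps_const (of_nat (Suc i)) * A x ^ (Suc i - 1) * A' v"
    proof (cases i)
      case 0 thus ?thesis by simp
    next
      case (Suc j)
      have e1: "A x * (fps_const (of_nat i) * A x ^ (i - 1) * A' v) = fps_const (of_nat i) * A x ^ i * A' v"
        using Suc by (simp add: algebra_simps)
      have c: "fps_const (of_nat (Suc i)::real) = 1 + fps_const (of_nat i)"
        by (metis fps_const_add fps_const_1_eq_1 of_nat_Suc add.commute)
      show ?thesis unfolding e1 c by (simp add: algebra_simps)
    qed
  qed
  ultimately show ?case by simp
qed

lemma EE_nth: "fps_nth (EE A) k = (\<Sum>i=0..k. fps_nth (A ^ i) k / fact i)"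
  unfolding EE_def fps_compose_nth by (simp add: fps_exp_def)

lemma EE_Xf_deriv0:
  "((\<lambda>h. fps_nth (EE (Xf h)) k) has_derivative (\<lambda>v. fps_nth (Xf v) k)) (at (0::real^'n::finite))"
proof -
  have "((\<lambda>h::real^'n. \<Sum>i=0..k. (1 / fact i) * fps_nth (Xf h ^ i) k) has_derivative
      (\<lambda>v::real^'n. \<Sum>i=0..k. (1 / fact i) * fps_nth (fps_const (of_nat i) * Xf (0::real^'n) ^ (i - 1) * Xf v) k)) (at 0)"
  proof (intro has_derivative_sum has_derivative_mult_right)
    fix i
    show "((\<lambda>h::real^'n. fps_nth (Xf h ^ i) k) has_derivative
      (\<lambda>v. fps_nth (fps_const (of_nat i) * Xf (0::real^'n) ^ (i - 1) * Xf v) k)) (at 0)"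
      using cd_power[OF cd_Xf[of "0::real^'n"], where i=i] unfolding cd_def by (rule spec)
  qed
  moreover have "(\<lambda>v::real^'n. \<Sum>i=0..k. (1 / fact i) * fps_nth (fps_const (of_nat i) * Xf (0::real^'n) ^ (i - 1) * Xf v) k)
     = (\<lambda>v. fps_nth (Xf v) k)"
  proof
    fix v :: "real^'n"
    have "(\<Sum>i=0..k. (1 / fact i) * fps_nth (fps_const (of_nat i) * Xf (0::real^'n) ^ (i - 1) * Xf v) k)
        = (\<Sum>i=0..k. if i = 1 then fps_nth (Xf v) k else 0)"
    proof (intro sum.cong refl)
      fix i assume "i \<in> {0..k}"
      show "(1 / fact i) * fps_nth (fps_const (of_nat i) * Xf (0::real^'n) ^ (i - 1) * Xf v) k
          = (if i = 1 then fps_nth (Xf v) k else 0)"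
        by (cases "i = 0"; cases "i = 1") (auto simp: power_0_left)
    qed
    also have "\<dots> = fps_nth (Xf v) k" by (cases k) auto
    finally show "(\<Sum>i=0..k. (1 / fact i) * fps_nth (fps_const (of_nat i) * Xf (0::real^'n) ^ (i - 1) * Xf v) k)
      = fps_nth (Xf v) k" .
  qed
  ultimately show ?thesis by (simp add: EE_nth)
qed

lemma EE_Xf_mult_deriv:
  "((\<lambda>y. fps_nth (EE (Xf y) * C) m) has_derivative (\<lambda>v. fps_nth (EE (Xf x) * Xf v * C) m)) (at (x::real^'n::finite))"
proof -
  have sh: "((\<lambda>y. fps_nth (EE (Xf (y - x))) k) has_derivative (\<lambda>v. fps_nth (Xf v) k)) (at x)" for k
  proof -
    have "((\<lambda>y. y - x) has_derivative (\<lambda>v. v)) (at x)"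
      by (intro derivative_eq_intros) auto
    from has_derivative_compose[OF this, of "\<lambda>h. fps_nth (EE (Xf h)) k" "\<lambda>v. fps_nth (Xf v) k"]
    show ?thesis using EE_Xf_deriv0[where 'n='n] by simp
  qed
  have eq: "fps_nth (EE (Xf y) * C) m = (\<Sum>k=0..m. fps_nth (EE (Xf (y - x))) k * fps_nth (EE (Xf x) * C) (m - k))" for y
  proof -
    have e: "EE (Xf y) * C = EE (Xf (y - x)) * (EE (Xf x) * C)"
      using EE_Xf_shift[of y x] by (simp add: algebra_simps)
    show ?thesis unfolding e by (rule fps_mult_nth)
  qed
  have "((\<lambda>y. \<Sum>k=0..m. fps_nth (EE (Xf (y - x))) k * fps_nth (EE (Xf x) * C) (m - k)) has_derivative
      (\<lambda>v. \<Sum>k=0..m. fps_nth (Xf v) k * fps_nth (EE (Xf x) * C) (m - k))) (at x)"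
    using sh by (intro has_derivative_sum has_derivative_mult_left) auto
  moreover have "(\<lambda>v::real^'n. \<Sum>k=0..m. fps_nth (Xf v) k * fps_nth (EE (Xf x) * C) (m - k)) = (\<lambda>v. fps_nth (EE (Xf x) * Xf v * C) m)"
  proof
    fix v :: "real^'n"
    have e: "EE (Xf x) * Xf v * C = Xf v * (EE (Xf x) * C)" by (simp add: algebra_simps)
    show "(\<Sum>k=0..m. fps_nth (Xf v) k * fps_nth (EE (Xf x) * C) (m - k)) = fps_nth (EE (Xf x) * Xf v * C) m"
      unfolding e by (rule fps_mult_nth[symmetric])
  qed
  ultimately show ?thesis unfolding eq by simp
qed



definition GC :: "real fps \<Rightarrow> real^'n::finite \<Rightarrow> real^('n \<times> 3)" where
  "GC C x = (\<chi> j. fps_nth (EE (Xf x) * C) (Suc (iota j)))"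

definition FF :: "real^'n::finite \<Rightarrow> real^('n \<times> 3)" where
  "FF x = (\<chi> j. fps_nth (EE (Xf x)) (Suc (iota j)))"

lemma FF_GC: "FF = GC 1"
  by (simp add: FF_def GC_def fun_eq_iff)

lemma hd_vec:
  fixes f :: "'a::real_normed_vector \<Rightarrow> real^'m::finite"
  assumes "\<And>j. ((\<lambda>x. f x $ j) has_derivative (\<lambda>h. f' h $ j)) (at a)"
  shows "(f has_derivative f') (at a)"
proof -
  have "(f has_derivative f') (at a within UNIV)"
  proof (subst has_derivative_componentwise_within, intro ballI)
    fix b :: "real^'m" assume "b \<in> Basis"
    then obtain j u where b: "b = axis j u" "u \<in> Basis" by (auto simp: Basis_vec_def)
    hence u: "u = 1" by simp
    show "((\<lambda>x. f x \<bullet> b) has_derivative (\<lambda>x. f' x \<bullet> b)) (at a within UNIV)"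
      using assms[of j] by (simp add: b u cart_eq_inner_axis[symmetric])
  qed
  thus ?thesis by simp
qed

lemma GC_deriv: "(GC C has_derivative (\<lambda>v. GC (Xf v * C) x)) (at x)"
proof (rule hd_vec)
  fix j
  show "((\<lambda>y. GC C y $ j) has_derivative (\<lambda>v. GC (Xf v * C) x $ j)) (at x)"
    unfolding GC_def using EE_Xf_mult_deriv[of C "Suc (iota j)" x] by (simp add: mult.assoc)
qed

lemma smooth_GC: "smooth_map (GC C)"
proof (rule smooth_map.coinduct[where X="\<lambda>g. \<exists>C. g = GC C"])
  show "\<exists>C'. GC C = GC C'" by blast
next
  fix g :: "real^'a \<Rightarrow> real^('a \<times> 3)" assume "\<exists>C. g = GC C"
  then obtain C where g: "g = GC C" by blast
  show "\<exists>g' g''. g = g' \<and> (\<forall>x. (g' has_derivative g'' x) (at x)) \<and>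
          (\<forall>x. (\<exists>C. (\<lambda>xa. g'' xa x) = GC C) \<or> smooth_map (\<lambda>xa. g'' xa x))"
    by (rule exI[of _ g], rule exI[of _ "\<lambda>x v. GC (Xf v * C) x"]) (auto simp: g GC_deriv)
qed

lemma FF_deriv: "(FF has_derivative (\<lambda>v. GC (Xf v) p)) (at p)"
  using GC_deriv[of 1 p] by (simp add: FF_GC)

lemma frechet_FF: "frechet_derivative FF (at p) = (\<lambda>v::real^'n::finite. GC (Xf v) p)"
  by (rule frechet_derivative_at[OF FF_deriv, symmetric])

lemma linear_DF: fixes p :: "real^'n::finite" shows "linear (\<lambda>v::real^'n. GC (Xf v) p)"
  by (rule has_derivative_linear[OF FF_deriv])

lemma agree_from_vec:
  assumes "\<And>j::'n::finite \<times> 3. fps_nth U (Suc (iota j)) = fps_nth V (Suc (iota j))"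
    and "fps_nth U 0 = fps_nth V 0"
  shows "agree (3 * CARD('n)) U V"
  unfolding agree_def
proof (intro allI impI)
  fix k assume k: "k \<le> 3 * CARD('n)"
  show "fps_nth U k = fps_nth V k"
  proof (cases k)
    case 0 thus ?thesis using assms(2) by simp
  next
    case (Suc k')
    hence "k' < CARD('n \<times> 3)" using k by (simp add: card_prod)
    then obtain j :: "'n \<times> 3" where "iota j = k'" using iota_surj by blast
    thus ?thesis using assms(1)[of j] Suc by simp
  qed
qed

lemma Xf_Suc: "fps_nth (Xf x) (Suc (iota i)) = x $ i"
  by (simp add: Xf_def)

lemma DF_inj:
  fixes h p :: "real^'n::finite"
  assumes a: "GC (Xf h) p = 0" shows "h = 0"
proof -
  have "agree (3 * CARD('n)) (EE (Xf p) * Xf h) 0"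
  proof (rule agree_from_vec)
    fix j :: "'n \<times> 3"
    show "fps_nth (EE (Xf p) * Xf h) (Suc (iota j)) = fps_nth 0 (Suc (iota j))"
      using arg_cong[OF a, of "\<lambda>y. y $ j"] by (simp add: GC_def)
  qed simp
  hence "agree (3 * CARD('n)) (Xf h) (EE (- Xf p) * 0)" by (rule agree_unit[OF Xf_0])
  hence "\<And>i. h $ i = 0"
  proof -
    fix i :: 'n
    assume ag: "agree (3 * CARD('n)) (Xf h) (EE (- Xf p) * 0)"
    have le: "Suc (iota i) \<le> 3 * CARD('n)" using iota_less[of i] by simp
    have "fps_nth (Xf h) (Suc (iota i)) = fps_nth (EE (- Xf p) * 0) (Suc (iota i))"
      using ag le unfolding agree_def by blast
    thus "h $ i = 0" by (simp add: Xf_Suc)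
  qed
  thus ?thesis by (simp add: vec_eq_iff)
qed

lemma agree_from_vec_gen:
  assumes "\<And>j::'a::finite. fps_nth U (Suc (iota j)) = fps_nth V (Suc (iota j))"
    and "fps_nth U 0 = fps_nth V 0"
  shows "agree (CARD('a)) U V"
  unfolding agree_def
proof (intro allI impI)
  fix k assume k: "k \<le> CARD('a)"
  show "fps_nth U k = fps_nth V k"
  proof (cases k)
    case 0 thus ?thesis using assms(2) by simp
  next
    case (Suc k')
    hence "k' < CARD('a)" using k by simp
    then obtain j :: 'a where "iota j = k'" using iota_surj by blast
    thus ?thesis using assms(1)[of j] Suc by simp
  qed
qed

definition GG :: "real^'n::finite \<Rightarrow> real^'n" where
  "GG x = (\<chi> i. fps_nth (EE (Xf x)) (Suc (iota i)))"

definition sel :: "'n::finite \<Rightarrow> 'n \<times> 3" where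
  "sel i = (SOME j. iota j = iota i)"

lemma sel: "iota (sel i) = iota (i::'n::finite)"
proof -
  have "iota i < CARD('n \<times> 3)" using iota_less[of i] by (simp add: card_prod)
  then obtain j :: "'n \<times> 3" where "iota j = iota i" using iota_surj by blast
  thus ?thesis unfolding sel_def by (rule someI)
qed

definition PR :: "real^('n::finite \<times> 3) \<Rightarrow> real^'n" where
  "PR y = (\<chi> i. y $ sel i)"

lemma PR_FF: "PR (FF x) = GG x"
  by (simp add: PR_def FF_def GG_def sel vec_eq_iff)

lemma cont_FF: "continuous_on UNIV (FF :: real^'n::finite \<Rightarrow> _)"
  by (rule continuous_at_imp_continuous_on) (blast intro: has_derivative_continuous FF_deriv)

lemma cont_PR: "continuous_on S (PR :: real^('n::finite \<times> 3) \<Rightarrow> _)"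
  unfolding PR_def by (intro continuous_on_vec_lambda continuous_intros)

lemma cont_GG: "continuous_on UNIV (GG :: real^'n::finite \<Rightarrow> _)"
proof -
  have e: "GG = (\<lambda>x. PR (FF x))" by (simp add: fun_eq_iff PR_FF)
  show ?thesis unfolding e using continuous_on_compose[OF cont_FF cont_PR] by (simp add: o_def)
qed

lemma GG_inj: "inj (GG :: real^'n::finite \<Rightarrow> _)"
proof (rule injI)
  fix x y :: "real^'n" assume e: "GG x = GG y"
  define d where "d = y - x"
  have ag: "agree (CARD('n)) (EE (Xf x)) (EE (Xf y))"
  proof (rule agree_from_vec_gen)
    fix i :: 'n
    show "fps_nth (EE (Xf x)) (Suc (iota i)) = fps_nth (EE (Xf y)) (Suc (iota i))"
      using arg_cong[OF e, of "\<lambda>z. z $ i"] by (simp add: GG_def)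
  qed (simp add: EE_0)
  have "agree (CARD('n)) (EE (Xf x) * 1) (EE (Xf x) * EE (Xf d))"
    using ag EE_Xf_shift[of y x] by (simp add: d_def)
  hence "agree (CARD('n)) 1 (EE (- Xf x) * (EE (Xf x) * EE (Xf d)))"
    by (rule agree_unit[OF Xf_0])
  moreover have "EE (- Xf x) * (EE (Xf x) * EE (Xf d)) = EE (Xf d)"
    using EE_inv[OF Xf_0[of x]] by (metis mult.assoc mult.commute mult_1)
  ultimately have ag1: "agree (CARD('n)) 1 (EE (Xf d))" by simp
  have cn: "CARD('n) = Suc (CARD('n) - 1)" by simp
  have "agree (CARD('n) - 1) (fps_deriv 1) (fps_deriv (EE (Xf d)))"
    using ag1 cn agree_deriv[of "CARD('n) - 1" 1 "EE (Xf d)"] by simp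
  hence "agree (CARD('n) - 1) (EE (Xf d) * fps_deriv (Xf d)) 0"
    by (simp add: EE_deriv mult.commute agree_def)
  hence ag2: "agree (CARD('n) - 1) (fps_deriv (Xf d)) (EE (- Xf d) * 0)"
    by (rule agree_unit[OF Xf_0])
  have "d $ i = 0" for i
  proof -
    have "iota i \<le> CARD('n) - 1" using iota_less[of i] by simp
    hence "fps_nth (fps_deriv (Xf d)) (iota i) = 0" using ag2 unfolding agree_def by simp
    hence "of_nat (iota i + 1) * d $ i = 0" using Xf_Suc[of d i] by simp
    thus ?thesis by simp
  qed
  hence "d = 0" by (simp add: vec_eq_iff)
  thus "x = y" by (simp add: d_def)
qed

lemma FF_homeo: "\<exists>g. homeomorphism UNIV (range FF) (FF :: real^'n::finite \<Rightarrow> _) g"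
proof -
  have ci: "continuous_on (GG ` UNIV) (inv (GG :: real^'n \<Rightarrow> _))"
    by (rule continuous_on_inverse_open[OF open_UNIV cont_GG]) (simp_all add: inv_f_f GG_inj)
  define g where "g = inv (GG :: real^'n \<Rightarrow> _) \<circ> PR"
  have gF: "g (FF x) = x" for x :: "real^'n"
    by (simp add: g_def PR_FF inv_f_f GG_inj)
  have "PR ` range (FF :: real^'n \<Rightarrow> _) = GG ` UNIV"
    by (auto simp: PR_FF image_iff)
  hence cg: "continuous_on (range FF) g"
    unfolding g_def using continuous_on_compose[OF cont_PR[of "range (FF :: real^'n \<Rightarrow> _)"]] ci by simp
  have "homeomorphism UNIV (range FF) FF g"
    unfolding homeomorphism_def using gF cg cont_FF
    by (auto simp: image_iff)
  thus ?thesis by blast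
qed

lemma skew_core:
  fixes p q h k :: "real^'n::finite" and l :: real
  assumes pq: "p \<noteq> q" and eq: "GC (Xf h) p - GC (Xf k) q + l *\<^sub>R (FF q - FF p) = 0"
  shows "h = 0 \<and> k = 0 \<and> l = 0"
proof -
  define P Q H K D where "P = Xf p" "Q = Xf q" "H = Xf h" "K = Xf k" "D = Xf (q - p)"
  define Z where "Z = EE P * H - EE Q * K + fps_const l * (EE Q - EE P)"
  have agZ: "agree (3 * CARD('n)) Z 0"
  proof (rule agree_from_vec)
    fix j :: "'n \<times> 3"
    show "fps_nth Z (Suc (iota j)) = fps_nth 0 (Suc (iota j))"
      using arg_cong[OF eq, of "\<lambda>y. y $ j"] by (simp add: Z_def GC_def FF_def P_Q_H_K_D_def algebra_simps)
  qed (simp add: Z_def P_Q_H_K_D_def EE_0)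
  have EQ: "EE Q = EE P * EE D" using EE_Xf_shift[of q p] by (simp add: P_Q_H_K_D_def)
  define Mh Ah where "Mh = K - fps_const l" "Ah = H - fps_const l"
  have "Z = EE P * (Ah - EE D * Mh)" by (simp add: Z_def EQ Mh_Ah_def algebra_simps)
  hence "agree (3*CARD('n)) (EE P * (Ah - EE D * Mh)) 0" using agZ by simp
  hence "agree (3*CARD('n)) (Ah - EE D * Mh) (EE (-P) * 0)"
    by (rule agree_unit[rotated]) (simp add: P_Q_H_K_D_def)
  hence ag: "agree (3*CARD('n)) (EE D * Mh) Ah" by (simp add: agree_def)
  define Dp Mp Ap where "Dp = Xp (q - p)" "Mp = Xp k - [:l:]" "Ap = Xp h - [:l:]"
  have fD: "fps_of_poly Dp = D" "fps_of_poly Mp = Mh" "fps_of_poly Ap = Ah"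
    by (simp_all add: Dp_Mp_Ap_def P_Q_H_K_D_def Mh_Ah_def Xf_def fps_of_poly_diff fps_of_poly_const)
  have n1: "1 \<le> CARD('n)" using finite_UNIV_card_ge_0[where 'a='n] by simp
  have dl: "degree (Xp x - [:l:]) \<le> CARD('n)" for x :: "real^'n"
    using degree_diff_le[OF degree_Xp[of x], of "[:l:]"] by simp
  have Dnz: "Dp \<noteq> 0" using pq Xp_eq_0[of "q - p"] by (auto simp: Dp_Mp_Ap_def)
  have "Mp = 0"
  proof (rule key[OF n1])
    show "degree Dp \<le> CARD('n)" by (simp add: Dp_Mp_Ap_def degree_Xp)
    show "degree Mp \<le> CARD('n)" by (simp add: Dp_Mp_Ap_def dl)
    show "degree Ap \<le> CARD('n)" by (simp add: Dp_Mp_Ap_def dl)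
    show "coeff Dp 0 = 0" by (simp add: Dp_Mp_Ap_def)
    show "Dp \<noteq> 0" by (rule Dnz)
    show "agree (3 * CARD('n)) (EE (fps_of_poly Dp) * fps_of_poly Mp) (fps_of_poly Ap)"
      using ag by (simp add: fD)
  qed
  hence "Xp k = [:l:]" by (simp add: Dp_Mp_Ap_def)
  hence "coeff (Xp k) 0 = l" by simp
  hence l0: "l = 0" by simp
  hence "Xp k = 0" using \<open>Mp = 0\<close> by (simp add: Dp_Mp_Ap_def)
  hence k0: "k = 0" by (rule Xp_eq_0)
  have Mh0: "Mh = 0" using \<open>Mp = 0\<close> fD by simp
  have "h $ i = 0" for i
  proof -
    have le: "Suc (iota i) \<le> 3 * CARD('n)" using iota_less[of i] by simp
    have "fps_nth (EE D * Mh) (Suc (iota i)) = fps_nth Ah (Suc (iota i))"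
      using ag le unfolding agree_def by blast
    thus ?thesis using Mh0 by (simp add: Mh_Ah_def P_Q_H_K_D_def Xf_Suc)
  qed
  hence "h = 0" by (simp add: vec_eq_iff)
  thus ?thesis using k0 l0 by simp
qed

lemma skew_FF:
  fixes p q :: "real^'n::finite"
  assumes pq: "p \<noteq> q"
  shows "totally_skew_at FF p q"
  unfolding totally_skew_at_def
proof (intro ballI conjI)
  fix L1 L2
  assume a1: "L1 \<in> tangent_lines FF p" and a2: "L2 \<in> tangent_lines FF q"
  from a1 have "\<exists>u. L1 = {FF p + t *\<^sub>R u | t. True} \<and> u \<in> range (\<lambda>v::real^'n. GC (Xf v) p) \<and> u \<noteq> 0"
    unfolding tangent_lines_def frechet_FF by (simp only: mem_Collect_eq)
  then obtain u where u: "L1 = {FF p + t *\<^sub>R u | t. True}" "u \<in> range (\<lambda>v::real^'n. GC (Xf v) p)" "u \<noteq> 0"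
    by blast
  from u(2) obtain h :: "real^'n" where uh: "u = GC (Xf h) p" by (rule rangeE)
  have L1: "L1 = {FF p + t *\<^sub>R GC (Xf h) p | t. True}" and u0: "GC (Xf h) p \<noteq> 0"
    using u uh by simp_all
  from a2 have "\<exists>v. L2 = {FF q + t *\<^sub>R v | t. True} \<and> v \<in> range (\<lambda>w::real^'n. GC (Xf w) q) \<and> v \<noteq> 0"
    unfolding tangent_lines_def frechet_FF by (simp only: mem_Collect_eq)
  then obtain v where v: "L2 = {FF q + t *\<^sub>R v | t. True}" "v \<in> range (\<lambda>w::real^'n. GC (Xf w) q)" "v \<noteq> 0"
    by blast
  from v(2) obtain k :: "real^'n" where vk: "v = GC (Xf k) q" by (rule rangeE)
  have L2: "L2 = {FF q + t *\<^sub>R GC (Xf k) q | t. True}" and v0: "GC (Xf k) q \<noteq> 0"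
    using v vk by simp_all
  have lin: "\<And>x::real^'n. linear (\<lambda>v::real^'n. GC (Xf v) x)" by (rule linear_DF)
  have sc: "GC (Xf (a *\<^sub>R v)) x = a *\<^sub>R GC (Xf v) x" for a and v x :: "real^'n"
    using linear_cmul[OF lin[of x]] by blast
  have z0: "GC (Xf (0::real^'n)) x = 0" for x :: "real^'n"
    using linear_0[OF lin[of x]] by blast
  show "\<not> parallel_sets L1 L2"
  proof
    assume "parallel_sets L1 L2"
    then obtain c where c: "L2 = (\<lambda>x. c + x) ` L1" unfolding parallel_sets_def by blast
    have "FF q \<in> L2" using L2 by (auto intro!: exI[of _ 0])
    then obtain t1 where t1: "FF q = c + (FF p + t1 *\<^sub>R GC (Xf h) p)" using c L1 by auto
    have "FF q + GC (Xf k) q \<in> L2" using L2 by (auto intro!: exI[of _ 1])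
    then obtain t2 where t2: "FF q + GC (Xf k) q = c + (FF p + t2 *\<^sub>R GC (Xf h) p)" using c L1 by auto
    have "GC (Xf k) q = (t2 - t1) *\<^sub>R GC (Xf h) p"
      using t1 t2 by (simp add: algebra_simps)
    hence "GC (Xf ((t2 - t1) *\<^sub>R h)) p - GC (Xf k) q + 0 *\<^sub>R (FF q - FF p) = 0"
      by (simp add: sc)
    hence "k = 0" using skew_core[OF pq] by blast
    thus False using v0 z0 by simp
  qed
  show "L1 \<inter> L2 = {}"
  proof (rule ccontr)
    assume "L1 \<inter> L2 \<noteq> {}"
    then obtain t s where ts: "FF p + t *\<^sub>R GC (Xf h) p = FF q + s *\<^sub>R GC (Xf k) q"
      using L1 L2 by auto
    hence "GC (Xf (t *\<^sub>R h)) p - GC (Xf (s *\<^sub>R k)) q + (-1) *\<^sub>R (FF q - FF p) = 0"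
      by (simp add: sc algebra_simps)
    hence "(-1::real) = 0" using skew_core[OF pq] by blast
    thus False by simp
  qed
qed

theorem corollary3p2:
  shows "\<exists>f :: real ^ 'n \<Rightarrow> real ^ ('n \<times> 3). totally_skew_embedding f"
proof (intro exI)
  have inj: "inj (frechet_derivative (FF :: real^'n \<Rightarrow> _) (at p))" for p
  proof -
    have lin: "linear (\<lambda>v::real^'n. GC (Xf v) p)" by (rule linear_DF)
    show ?thesis unfolding frechet_FF
    proof (rule injI)
      fix a b :: "real^'n" assume "GC (Xf a) p = GC (Xf b) p"
      hence "GC (Xf (a - b)) p = 0" using linear_diff[OF lin, of a b] by simp
      hence "a - b = 0" by (rule DF_inj)
      thus "a = b" by simp
    qed
  qed
  show "totally_skew_embedding (FF :: real^'n \<Rightarrow> _)"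
    unfolding totally_skew_embedding_def smooth_embedding_def
  proof (intro conjI allI impI)
    show "smooth_map (FF :: real^'n \<Rightarrow> _)" using smooth_GC[of 1] by (simp add: FF_GC)
    show "\<And>p. inj (frechet_derivative (FF :: real^'n \<Rightarrow> _) (at p))" by (rule inj)
    show "\<exists>g. homeomorphism UNIV (range FF) (FF :: real^'n \<Rightarrow> _) g" by (rule FF_homeo)
    show "\<And>p q. p \<noteq> q \<Longrightarrow> totally_skew_at (FF :: real^'n \<Rightarrow> _) p q" by (rule skew_FF)
  qed
qed


end
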